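(* Let $R$ be a semiring, let $\mathcal{I}(R)$ be the set of ideals of $R$, $\mathcal{KI}(R)$ the set of $k$-ideals of $R$, and $\mathcal{KC}(R)$ the set of $k$-congruences on $R$, and let $\kappa:\mathcal{I}(R)\to\{\text{congruences on }R\}$ be $\kappa(A)=\kappa_A$. (1) The restriction of $\kappa$ to $\mathcal{KI}(R)$ is an inclusion-preserving bijection from $\mathcal{KI}(R)$ onto $\mathcal{KC}(R)$. (2) If $\mathcal{F}$ is a family with $\mathcal{KI}(R)\subseteq\mathcal{F}\subseteq\mathcal{I}(R)$ and $\kappa$ is injective on $\mathcal{F}$, then $\mathcal{F}=\mathcal{KI}(R)$.
   Context: A semiring $(R,+,\cdot)$ is a set with two binary operations such that $(R,+)$ is a commutative semigroup, $(R,\cdot)$ is a semigroup, and multiplication distributes over addition from both sides; no additive neutral element or identity is assumed. An ideal of $R$ is a nonempty subset $A\subseteq R$ with $a+b\in A$ and $ra,ar\in A$ for all $a,b\in A$, $r\in R$. For an ideal $A$, its $k$-closure is $\overline{A}=\{x\in R\mid x+a=b \text{ for some } a,b\in A\}$, and $A$ is a $k$-ideal if $A=\overline{A}$. A congruence on $R$ is an equivalence relation $\equiv$ such that $a\equiv b$ implies $a+c\equiv b+c$, $ac\equiv bc$, $ca\equiv cb$ for all $a,b,c\in R$. For an ideal $A$, $\kappa_A$ is the congruence defined by $x\,\kappa_A\,y$ iff $x+a=y+b$ for some $a,b\in A$. A congruence $\theta$ is a $k$-congruence if $\theta=\kappa_A$ for some ideal $A$ of $R$. Congruences are compared as subsets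 of $R\times R$. Throughout, $|R|\geq 2$. *)

theory Defs
  imports Main
begin

text \<open>Semirings in the paper's sense (no zero, no one) are exactly Isabelle's class semiring.\<close>

definition is_ideal :: "'a::semiring set \<Rightarrow> bool" where
  "is_ideal A \<longleftrightarrow> A \<noteq> {} \<and> (\<forall>a\<in>A. \<forall>b\<in>A. a + b \<in> A)
     \<and> (\<forall>a\<in>A. \<forall>r. r * a \<in> A \<and> a * r \<in> A)"

definition kclosure :: "'a::semiring set \<Rightarrow> 'a set" where
  "kclosure A = {x. \<exists>a\<in>A. \<exists>b\<in>A. x + a = b}"

definition is_k_ideal :: "'a::semiring set \<Rightarrow> bool" where
  "is_k_ideal A \<longleftrightarrow> is_ideal A \<and> A = kclosure A"

definition kappa :: "'a::semiring set \<Rightarrow> ('a \<times> 'a) set" where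
  "kappa A = {(x, y). \<exists>a\<in>A. \<exists>b\<in>A. x + a = y + b}"

definition is_congruence :: "('a::semiring \<times> 'a) set \<Rightarrow> bool" where
  "is_congruence \<theta> \<longleftrightarrow> equiv UNIV \<theta> \<and>
     (\<forall>a b c. (a, b) \<in> \<theta> \<longrightarrow> (a + c, b + c) \<in> \<theta> \<and> (a * c, b * c) \<in> \<theta> \<and> (c * a, c * b) \<in> \<theta>)"

definition is_k_congruence :: "('a::semiring \<times> 'a) set \<Rightarrow> bool" where
  "is_k_congruence \<theta> \<longleftrightarrow> (\<exists>A. is_ideal A \<and> \<theta> = kappa A)"

end

theory Submission
  imports Defs
begin

lemma sub_cl: "A \<subseteq> kclosure (A::'a::semiring set)" if "is_ideal A"
proof
  fix x assume "x \<in> A"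
  then have "x + x = x + x" "x + x \<in> A" using that unfolding is_ideal_def by auto
  thus "x \<in> kclosure A" using \<open>x\<in>A\<close> unfolding kclosure_def by blast
qed

lemma cl_ideal: "is_ideal (kclosure (A::'a::semiring set))" if "is_ideal A"
proof -
  have "kclosure A \<noteq> {}" using sub_cl[OF that] that unfolding is_ideal_def by blast
  moreover have "x + y \<in> kclosure A" if "x \<in> kclosure A" "y \<in> kclosure A" for x y
  proof -
    obtain a b where ab: "a\<in>A" "b\<in>A" "x + a = b" using \<open>x \<in> kclosure A\<close> unfolding kclosure_def by blast
    obtain c d where cd: "c\<in>A" "d\<in>A" "y + c = d" using \<open>y \<in> kclosure A\<close> unfolding kclosure_def by blast
    have "(x+y) + (a+c) = (x+a) + (y+c)" by (simp add: ac_simps)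
    also have "\<dots> = b + d" using ab cd by simp
    finally have "(x+y) + (a+c) = b + d" .
    moreover have "a+c \<in> A" "b+d \<in> A" using ab cd \<open>is_ideal A\<close> unfolding is_ideal_def by auto
    ultimately show ?thesis unfolding kclosure_def by blast
  qed
  moreover have "r * x \<in> kclosure A \<and> x * r \<in> kclosure A" if "x \<in> kclosure A" for x r
  proof -
    note xin = that
    obtain a b where ab: "a\<in>A" "b\<in>A" "x + a = b" using xin unfolding kclosure_def by blast
    have "r*x + r*a = r*b" "x*r + a*r = b*r" using ab by (metis distrib_left, metis distrib_right)
    moreover have "r*a \<in> A" "r*b \<in> A" "a*r \<in> A" "b*r \<in> A" using ab \<open>is_ideal A\<close> unfolding is_ideal_def by auto
    ultimately show ?thesis unfolding kclosure_def by blast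
  qed
  ultimately show ?thesis unfolding is_ideal_def by blast
qed

lemma cl_idem: "kclosure (kclosure (A::'a::semiring set)) = kclosure A" if "is_ideal A"
proof
  show "kclosure A \<subseteq> kclosure (kclosure A)" using sub_cl[OF cl_ideal[OF that]] .
  show "kclosure (kclosure A) \<subseteq> kclosure A"
  proof
    fix x assume "x \<in> kclosure (kclosure A)"
    then obtain c d where cd: "c \<in> kclosure A" "d \<in> kclosure A" "x + c = d" unfolding kclosure_def by blast
    obtain a1 b1 where 1: "a1\<in>A" "b1\<in>A" "c + a1 = b1" using cd unfolding kclosure_def by blast
    obtain a2 b2 where 2: "a2\<in>A" "b2\<in>A" "d + a2 = b2" using cd unfolding kclosure_def by blast
    have "x + (b1 + a2) = (x + c) + a2 + a1" by (simp add: 1(3)[symmetric] ac_simps)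
    also have "\<dots> = b2 + a1" using 2 cd by simp
    finally have "x + (b1 + a2) = b2 + a1" .
    moreover have "b1+a2 \<in> A" "b2+a1 \<in> A" using 1 2 that unfolding is_ideal_def by auto
    ultimately show "x \<in> kclosure A" unfolding kclosure_def by blast
  qed
qed

lemma cl_k: "is_k_ideal (kclosure (A::'a::semiring set))" if "is_ideal A"
  using cl_ideal[OF that] cl_idem[OF that] unfolding is_k_ideal_def by simp

lemma kappa_mono: "A \<subseteq> B \<Longrightarrow> kappa A \<subseteq> kappa B"
  unfolding kappa_def by blast

lemma kappa_cl: "kappa (kclosure (A::'a::semiring set)) = kappa A" if "is_ideal A"
proof
  show "kappa A \<subseteq> kappa (kclosure A)" using kappa_mono[OF sub_cl[OF that]] .
  show "kappa (kclosure A) \<subseteq> kappa A"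
  proof
    fix p assume "p \<in> kappa (kclosure A)"
    then obtain x y c d where p: "p = (x,y)" "c \<in> kclosure A" "d \<in> kclosure A" "x + c = y + d"
      unfolding kappa_def by blast
    obtain a1 b1 where 1: "a1\<in>A" "b1\<in>A" "c + a1 = b1" using p unfolding kclosure_def by blast
    obtain a2 b2 where 2: "a2\<in>A" "b2\<in>A" "d + a2 = b2" using p unfolding kclosure_def by blast
    have "x + (b1 + a2) = (x + c) + a1 + a2" by (simp add: 1(3)[symmetric] ac_simps)
    also have "\<dots> = (y + d) + a2 + a1" using p by (simp add: ac_simps)
    also have "\<dots> = y + (b2 + a1)" by (simp add: 2(3)[symmetric] ac_simps)
    finally have "x + (b1 + a2) = y + (b2 + a1)" .
    moreover have "b1+a2 \<in> A" "b2+a1 \<in> A" using 1 2 that unfolding is_ideal_def by auto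
    ultimately show "p \<in> kappa A" using p unfolding kappa_def by blast
  qed
qed

lemma kappa_refl: "kappa A \<subseteq> kappa B \<Longrightarrow> is_ideal A \<Longrightarrow> is_k_ideal (B::'a::semiring set) \<Longrightarrow> A \<subseteq> B"
proof
  fix a assume h: "kappa A \<subseteq> kappa B" "is_ideal A" "is_k_ideal B" and a: "a \<in> A"
  obtain b where b: "b \<in> B" using h(3) unfolding is_k_ideal_def is_ideal_def by blast
  have "a + a \<in> A" using a h(2) unfolding is_ideal_def by auto
  moreover have "(a + b) + a = b + (a + a)" by (simp add: ac_simps)
  ultimately have "(a+b, b) \<in> kappa A" using a unfolding kappa_def by blast
  with h(1) obtain b1 b2 where "b1 \<in> B" "b2 \<in> B" "a + b + b1 = b + b2" unfolding kappa_def by blast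
  moreover hence "a + (b + b1) = b + b2" by (simp add: ac_simps)
  moreover have "b + b1 \<in> B" "b + b2 \<in> B" using b \<open>b1\<in>B\<close> \<open>b2\<in>B\<close> h(3) unfolding is_k_ideal_def is_ideal_def by auto
  ultimately have "a \<in> kclosure B" unfolding kclosure_def by blast
  thus "a \<in> B" using h(3) unfolding is_k_ideal_def by simp
qed

theorem theorem3p8:
  assumes "\<exists>x y :: 'a::semiring. x \<noteq> y"
  shows "(bij_betw (kappa :: 'a set \<Rightarrow> _) {A. is_k_ideal A} {\<theta>. is_k_congruence \<theta>}
         \<and> (\<forall>A B :: 'a set. is_k_ideal A \<longrightarrow> is_k_ideal B \<longrightarrow> A \<subseteq> B \<longrightarrow> kappa A \<subseteq> kappa B))
         \<and> (\<forall>F :: 'a set set. {A. is_k_ideal A} \<subseteq> F \<and> F \<subseteq> {A. is_ideal A} \<and> inj_on kappa F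
           \<longrightarrow> F = {A. is_k_ideal A})"
proof (intro conjI allI impI)
  show "bij_betw (kappa :: 'a set \<Rightarrow> _) {A. is_k_ideal A} {\<theta>. is_k_congruence \<theta>}"
    unfolding bij_betw_def
  proof (intro conjI)
    show "inj_on (kappa :: 'a set \<Rightarrow> _) {A. is_k_ideal A}"
      by (rule inj_onI) (metis kappa_refl is_k_ideal_def mem_Collect_eq subset_antisym order_refl)
    show "kappa ` {A. is_k_ideal A} = {\<theta>::('a\<times>'a) set. is_k_congruence \<theta>}"
    proof
      show "kappa ` {A. is_k_ideal A} \<subseteq> {\<theta>::('a\<times>'a) set. is_k_congruence \<theta>}"
        unfolding is_k_congruence_def is_k_ideal_def by blast
      show "{\<theta>::('a\<times>'a) set. is_k_congruence \<theta>} \<subseteq> kappa ` {A. is_k_ideal A}"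
      proof
        fix \<theta> :: "('a\<times>'a) set" assume "\<theta> \<in> {\<theta>. is_k_congruence \<theta>}"
        then obtain A where "is_ideal A" "\<theta> = kappa A" unfolding is_k_congruence_def by blast
        thus "\<theta> \<in> kappa ` {A. is_k_ideal A}" using kappa_cl cl_k by (metis image_eqI mem_Collect_eq)
      qed
    qed
  qed
  show "\<And>A B :: 'a set. is_k_ideal A \<Longrightarrow> is_k_ideal B \<Longrightarrow> A \<subseteq> B \<Longrightarrow> kappa A \<subseteq> kappa B"
    using kappa_mono by blast
  fix F :: "'a set set"
  assume h: "{A. is_k_ideal A} \<subseteq> F \<and> F \<subseteq> {A. is_ideal A} \<and> inj_on kappa F"
  show "F = {A. is_k_ideal A}"
  proof
    show "{A. is_k_ideal A} \<subseteq> F" using h by blast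
    show "F \<subseteq> {A. is_k_ideal A}"
    proof
      fix A assume "A \<in> F"
      hence i: "is_ideal A" using h by blast
      have "kclosure A \<in> F" using cl_k[OF i] h by blast
      hence "kclosure A = A" using h \<open>A \<in> F\<close> kappa_cl[OF i] unfolding inj_on_def by blast
      thus "A \<in> {A. is_k_ideal A}" using i unfolding is_k_ideal_def by simp
    qed
  qed
qed

end
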